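(* Let $n\ge1$ and let $T\in\mathbb R[x,u_0,\dots,u_n]$ be nonzero. Write $T=Q(x,v_0,\dots,v_n)$ with $Q$ a real polynomial, and let $m$ be the degree of $Q$ in the variable $x$. Then $T(\mathcal P_n)\subset\mathcal P_m$ and $T(\mathcal P_n)\not\subset\mathcal P_{m-1}$; i.e. $T$ has deficiency $n-m$ relative to $\mathcal P_n$.
   Context: Elements $P\in\mathbb R[x,u_0,\dots,u_n]$ act on smooth $f$ by $P[f](x)=P(x,f(x),f'(x),\dots,f^{(n)}(x))$. $\mathcal P_s$ is the space of real polynomials in $x$ of degree $\le s$ ($\mathcal P_s=\{0\}$ for $s<0$). Deficiency $m$ relative to $\mathcal P_n$ means $T(\mathcal P_n)\subset\mathcal P_{n-m}$ but $T(\mathcal P_n)\not\subset\mathcal P_{n-m-1}$. For $j=0,\dots,n$, $v_j=\sum_{i=0}^{n-j}(-1)^i\frac{x^i}{i!}u_{i+j}$; the elements $x,v_0,\dots,v_n$ freely generate the algebra $\mathbb R[x,u_0,\dots,u_n]$, so $Q$ is unique. *)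

theory Defs
  imports "HOL-Library.Poly_Mapping" "HOL-Computational_Algebra.Polynomial"
begin

text \<open>Variable index 0 stands for x, index Suc i for u_i (resp. v_i for Q).\<close>

type_synonym mpoly = "(nat \<Rightarrow>\<^sub>0 nat) \<Rightarrow>\<^sub>0 real"

definition mvar :: "nat \<Rightarrow> mpoly" where
  "mvar i = Poly_Mapping.single (Poly_Mapping.single i 1) 1"

definition mconst :: "real \<Rightarrow> mpoly" where
  "mconst c = Poly_Mapping.single 0 c"

definition vars_le :: "nat \<Rightarrow> mpoly \<Rightarrow> bool" where
  "vars_le k P \<longleftrightarrow> (\<forall>m\<in>Poly_Mapping.keys P. \<forall>i\<in>Poly_Mapping.keys m. i \<le> k)"

definition msubst :: "mpoly \<Rightarrow> (nat \<Rightarrow> mpoly) \<Rightarrow> mpoly" where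
  "msubst Q \<sigma> = (\<Sum>m\<in>Poly_Mapping.keys Q. mconst (Poly_Mapping.lookup Q m) * (\<Prod>i\<in>Poly_Mapping.keys m. \<sigma> i ^ Poly_Mapping.lookup m i))"

definition meval :: "mpoly \<Rightarrow> (nat \<Rightarrow> real) \<Rightarrow> real" where
  "meval P a = (\<Sum>m\<in>Poly_Mapping.keys P. Poly_Mapping.lookup P m * (\<Prod>i\<in>Poly_Mapping.keys m. a i ^ Poly_Mapping.lookup m i))"

definition vpoly :: "nat \<Rightarrow> nat \<Rightarrow> mpoly" where
  "vpoly n j = (\<Sum>i=0..n-j. mconst ((-1)^i / fact i) * mvar 0 ^ i * mvar (Suc (i+j)))"

definition degx :: "mpoly \<Rightarrow> nat" where
  "degx P = Max (insert 0 ((\<lambda>m. Poly_Mapping.lookup m 0) ` Poly_Mapping.keys P))"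

definition act :: "mpoly \<Rightarrow> real poly \<Rightarrow> real \<Rightarrow> real" where
  "act P f x = meval P (\<lambda>i. if i = 0 then x else poly ((pderiv ^^ (i - 1)) f) x)"

text \<open>Membership of a function in P_s (real polynomials of degree \<le> s; {0} if s < 0).\<close>
definition inP :: "int \<Rightarrow> (real \<Rightarrow> real) \<Rightarrow> bool" where
  "inP s g \<longleftrightarrow> (\<exists>q. g = poly q \<and> (if s < 0 then q = 0 else Polynomial.degree q \<le> nat s))"

definition maps_into :: "mpoly \<Rightarrow> nat \<Rightarrow> int \<Rightarrow> bool" where
  "maps_into T n s \<longleftrightarrow> (\<forall>f::real poly. Polynomial.degree f \<le> n \<longrightarrow> inP s (act T f))"

end

theory Submission
  imports Defs
begin


definition mon :: "(nat \<Rightarrow>\<^sub>0 nat) \<Rightarrow> (nat \<Rightarrow> real) \<Rightarrow> real" where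
  "mon m a = (\<Prod>i\<in>Poly_Mapping.keys m. a i ^ Poly_Mapping.lookup m i)"

lemma meval_mon: "meval P a = (\<Sum>m\<in>Poly_Mapping.keys P. Poly_Mapping.lookup P m * mon m a)"
  by (simp add: meval_def mon_def)

lemma mon_superset: "finite S \<Longrightarrow> Poly_Mapping.keys m \<subseteq> S \<Longrightarrow>
   mon m a = (\<Prod>i\<in>S. a i ^ Poly_Mapping.lookup m i)"
  unfolding mon_def
  by (rule prod.mono_neutral_left) (auto simp: in_keys_iff)

lemma mon_add: "mon (m1 + m2) a = mon m1 a * mon m2 a"
proof -
  let ?S = "Poly_Mapping.keys m1 \<union> Poly_Mapping.keys m2"
  have "mon (m1 + m2) a = (\<Prod>i\<in>?S. a i ^ Poly_Mapping.lookup (m1+m2) i)"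
    by (rule mon_superset) (auto simp: keys_add)
  also have "\<dots> = (\<Prod>i\<in>?S. a i ^ Poly_Mapping.lookup m1 i * a i ^ Poly_Mapping.lookup m2 i)"
    by (simp add: lookup_add power_add)
  also have "\<dots> = mon m1 a * mon m2 a"
    by (simp add: prod.distrib mon_superset[of ?S])
  finally show ?thesis .
qed

lemma mon_zero[simp]: "mon 0 a = 1" by (simp add: mon_def)

lemma mon_single[simp]: "mon (Poly_Mapping.single i k) a = a i ^ k"
  by (simp add: mon_def)

lemma meval_superset: "finite S \<Longrightarrow> Poly_Mapping.keys P \<subseteq> S \<Longrightarrow>
   meval P a = (\<Sum>m\<in>S. Poly_Mapping.lookup P m * mon m a)"
  unfolding meval_mon
  by (rule sum.mono_neutral_left) (auto simp: in_keys_iff)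

lemma meval_add: "meval (P + Q) a = meval P a + meval Q a"
proof -
  let ?S = "Poly_Mapping.keys P \<union> Poly_Mapping.keys Q"
  have "meval (P + Q) a = (\<Sum>m\<in>?S. Poly_Mapping.lookup (P+Q) m * mon m a)"
    by (rule meval_superset) (auto simp: keys_add)
  also have "\<dots> = meval P a + meval Q a"
    by (simp add: lookup_add distrib_right sum.distrib meval_superset[of ?S])
  finally show ?thesis .
qed

lemma meval_zero[simp]: "meval 0 a = 0" by (simp add: meval_def)

lemma meval_single[simp]: "meval (Poly_Mapping.single m c) a = c * mon m a"
  by (simp add: meval_mon)

lemma meval_sum: "meval (sum f A) a = (\<Sum>x\<in>A. meval (f x) a)"
  by (induction A rule: infinite_finite_induct) (auto simp: meval_add)

lemma sum_monomials: "P = (\<Sum>m\<in>Poly_Mapping.keys P. Poly_Mapping.single m (Poly_Mapping.lookup P m))"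
  by (rule poly_mapping_eqI) (auto simp: lookup_sum lookup_single when_def in_keys_iff
        intro: sum.neutral)

lemma meval_mult: "meval (P * Q) a = meval P a * meval Q a"
proof -
  have "P * Q = (\<Sum>m\<in>Poly_Mapping.keys P. Poly_Mapping.single m (Poly_Mapping.lookup P m)) *
     (\<Sum>m'\<in>Poly_Mapping.keys Q. Poly_Mapping.single m' (Poly_Mapping.lookup Q m'))"
    using sum_monomials[of P] sum_monomials[of Q] by simp
  also have "\<dots> = (\<Sum>m\<in>Poly_Mapping.keys P. \<Sum>m'\<in>Poly_Mapping.keys Q.
      Poly_Mapping.single (m + m') (Poly_Mapping.lookup P m * Poly_Mapping.lookup Q m'))"
    by (simp add: sum_product mult_single)
  finally have "meval (P * Q) a = (\<Sum>m\<in>Poly_Mapping.keys P. \<Sum>m'\<in>Poly_Mapping.keys Q.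
      (Poly_Mapping.lookup P m * Poly_Mapping.lookup Q m') * (mon m a * mon m' a))"
    by (simp add: meval_sum mon_add)
  also have "\<dots> = meval P a * meval Q a"
    by (simp add: meval_mon sum_product mult_ac)
  finally show ?thesis .
qed

lemma meval_one[simp]: "meval 1 a = 1"
proof -
  have "(1::mpoly) = Poly_Mapping.single 0 1" by simp
  then show ?thesis by (metis meval_single mon_zero mult_1)
qed

lemma meval_power: "meval (P ^ k) a = meval P a ^ k"
  by (induction k) (auto simp: meval_mult)

lemma meval_prod: "meval (prod f A) a = (\<Prod>x\<in>A. meval (f x) a)"
  by (induction A rule: infinite_finite_induct) (auto simp: meval_mult)

lemma meval_mvar[simp]: "meval (mvar i) a = a i"
  by (simp add: mvar_def)

lemma meval_mconst[simp]: "meval (mconst c) a = c"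
  by (simp add: mconst_def)

lemma meval_msubst: "meval (msubst Q \<sigma>) a = meval Q (\<lambda>k. meval (\<sigma> k) a)"
  unfolding msubst_def meval_sum
  by (simp add: meval_mult meval_prod meval_power) (simp add: meval_def)



lemma higher_pderiv_zero: "degree g < k \<Longrightarrow> (pderiv ^^ k) g = 0"
  by (rule poly_eqI) (simp add: coeff_higher_pderiv coeff_eq_0)

lemma degree_higher_pderiv: "degree ((pderiv ^^ k) (g::real poly)) = degree g - k"
proof (induction k)
  case (Suc k)
  have "degree ((pderiv ^^ Suc k) g) = degree ((pderiv ^^ k) g) - 1"
    using degree_pderiv by simp
  then show ?case using Suc by simp
qed simp

lemma taylor_poly:
  fixes g :: "real poly"
  assumes "degree g \<le> N"
  shows "poly g 0 = (\<Sum>i=0..N. (-1)^i / fact i * x^i * poly ((pderiv ^^ i) g) x)"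
proof (cases "x = 0")
  case True
  then show ?thesis
    by (simp add: sum.atLeast_Suc_atMost[of 0 N, simplified] power_0_left)
next
  case False
  define diff where "diff m = poly ((pderiv ^^ m) g)" for m
  have D: "\<forall>m t. m < Suc N \<and> - \<bar>x\<bar> \<le> t \<and> t \<le> \<bar>x\<bar> \<longrightarrow> DERIV (diff m) t :> diff (Suc m) t"
    by (auto simp: diff_def)
  have "\<exists>t. (if 0 < x then 0 < t \<and> t < x else x < t \<and> t < 0) \<and> poly g 0 = (\<Sum>m<Suc N. (diff m x / fact m) * (0 - x)^m) + (diff (Suc N) t / fact (Suc N)) * (0 - x)^(Suc N)"
    using Taylor[where n="Suc N" and diff=diff and f="poly g" and a="- \<bar>x\<bar>" and b="\<bar>x\<bar>" and c=x and x=0, OF _ _ D] False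
    by (simp add: diff_def)
  then obtain t where "poly g 0 = (\<Sum>m<Suc N. (diff m x / fact m) * (0 - x)^m) + (diff (Suc N) t / fact (Suc N)) * (0 - x)^(Suc N)"
    by blast
  moreover have "diff (Suc N) t = 0"
    using assms by (simp add: diff_def higher_pderiv_zero del: funpow.simps)
  ultimately have "poly g 0 = (\<Sum>m<Suc N. (diff m x / fact m) * (0 - x)^m)" by simp
  also have "\<dots> = (\<Sum>i=0..N. (-1)^i / fact i * x^i * poly ((pderiv ^^ i) g) x)"
    by (rule sum.cong) (auto simp: diff_def power_minus' atLeast0AtMost lessThan_Suc_atMost)
  finally show ?thesis .
qed

lemma vpoly_eval:
  fixes f :: "real poly"
  assumes "degree f \<le> n"
  shows "meval (vpoly n j) (\<lambda>i. if i = 0 then x else poly ((pderiv ^^ (i - 1)) f) x)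
     = poly ((pderiv ^^ j) f) 0"
proof -
  define g where "g = (pderiv ^^ j) f"
  have dg: "degree g \<le> n - j" using assms by (simp add: g_def degree_higher_pderiv)
  have "meval (vpoly n j) (\<lambda>i. if i = 0 then x else poly ((pderiv ^^ (i - 1)) f) x)
     = (\<Sum>i=0..n-j. (-1)^i / fact i * x^i * poly ((pderiv ^^ (i + j)) f) x)"
    by (simp add: vpoly_def meval_sum meval_mult meval_power)
  also have "\<dots> = (\<Sum>i=0..n-j. (-1)^i / fact i * x^i * poly ((pderiv ^^ i) g) x)"
    by (simp add: g_def funpow_add)
  also have "\<dots> = poly g 0" using taylor_poly[OF dg] by simp
  finally show ?thesis by (simp add: g_def)
qed



definition clear :: "nat \<Rightarrow> (nat \<Rightarrow>\<^sub>0 nat) \<Rightarrow> (nat \<Rightarrow>\<^sub>0 nat)" where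
  "clear v m = Poly_Mapping.update v 0 m"

lemma lookup_clear: "Poly_Mapping.lookup (clear v m) i = (if i = v then 0 else Poly_Mapping.lookup m i)"
  by (simp add: clear_def lookup_update)

lemma keys_clear: "Poly_Mapping.keys (clear v m) = Poly_Mapping.keys m - {v}"
  by (simp add: clear_def keys_update)

definition upoly :: "mpoly \<Rightarrow> nat \<Rightarrow> (nat \<Rightarrow> real) \<Rightarrow> real poly" where
  "upoly R v c = (\<Sum>m\<in>Poly_Mapping.keys R.
      monom (Poly_Mapping.lookup R m * mon (clear v m) c) (Poly_Mapping.lookup m v))"

definition slice :: "mpoly \<Rightarrow> nat \<Rightarrow> nat \<Rightarrow> mpoly" where
  "slice R v k = (\<Sum>m\<in>{m\<in>Poly_Mapping.keys R. Poly_Mapping.lookup m v = k}.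
      Poly_Mapping.single (clear v m) (Poly_Mapping.lookup R m))"

definition vars :: "mpoly \<Rightarrow> nat set" where
  "vars R = (\<Union>m\<in>Poly_Mapping.keys R. Poly_Mapping.keys m)"

lemma finite_vars: "finite (vars R)"
  by (simp add: vars_def)

lemma mon_clear: "mon m a = mon (clear v m) a * a v ^ Poly_Mapping.lookup m v"
proof -
  let ?S = "insert v (Poly_Mapping.keys m)"
  have "mon m a = (\<Prod>i\<in>?S. a i ^ Poly_Mapping.lookup m i)"
    by (rule mon_superset) auto
  also have "\<dots> = a v ^ Poly_Mapping.lookup m v * (\<Prod>i\<in>?S - {v}. a i ^ Poly_Mapping.lookup m i)"
    by (rule prod.remove) auto
  also have "(\<Prod>i\<in>?S - {v}. a i ^ Poly_Mapping.lookup m i) = (\<Prod>i\<in>?S - {v}. a i ^ Poly_Mapping.lookup (clear v m) i)"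
    by (rule prod.cong) (auto simp: lookup_clear)
  also have "\<dots> = mon (clear v m) a"
    by (rule mon_superset[symmetric]) (auto simp: keys_clear)
  finally show ?thesis by simp
qed

lemma poly_upoly: "poly (upoly R v c) (c v) = meval R c"
  unfolding upoly_def poly_sum poly_monom meval_mon
proof (rule sum.cong)
  fix m
  have e: "mon m c = mon (clear v m) c * c v ^ Poly_Mapping.lookup m v" by (rule mon_clear)
  show "Poly_Mapping.lookup R m * mon (clear v m) c * c v ^ Poly_Mapping.lookup m v =
         Poly_Mapping.lookup R m * mon m c" unfolding e by (simp add: mult_ac)
qed simp

lemma mon_clear_upd: "mon (clear v m) (c(v := t)) = mon (clear v m) c"
  unfolding mon_def by (rule prod.cong) (auto simp: keys_clear)

lemma upoly_upd: "upoly R v (c(v := t)) = upoly R v c"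
  by (simp add: upoly_def mon_clear_upd)

lemma coeff_upoly: "coeff (upoly R v c) k = meval (slice R v k) c"
proof -
  have "coeff (upoly R v c) k = (\<Sum>m\<in>Poly_Mapping.keys R.
      if Poly_Mapping.lookup m v = k then Poly_Mapping.lookup R m * mon (clear v m) c else 0)"
    by (simp add: upoly_def coeff_sum)
  also have "\<dots> = (\<Sum>m\<in>{m\<in>Poly_Mapping.keys R. Poly_Mapping.lookup m v = k}.
      Poly_Mapping.lookup R m * mon (clear v m) c)"
    by (simp add: sum.inter_filter)
  also have "\<dots> = meval (slice R v k) c"
    by (simp add: slice_def meval_sum)
  finally show ?thesis .
qed

lemma clear_inj: "clear v m1 = clear v m2 \<Longrightarrow> Poly_Mapping.lookup m1 v = Poly_Mapping.lookup m2 v \<Longrightarrow> m1 = m2"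
proof (rule poly_mapping_eqI)
  fix i
  assume a: "clear v m1 = clear v m2" "Poly_Mapping.lookup m1 v = Poly_Mapping.lookup m2 v"
  have "Poly_Mapping.lookup (clear v m1) i = Poly_Mapping.lookup (clear v m2) i" using a(1) by simp
  then show "Poly_Mapping.lookup m1 i = Poly_Mapping.lookup m2 i"
    using a(2) by (cases "i = v") (simp_all add: lookup_clear)
qed

lemma lookup_slice:
  assumes "m \<in> Poly_Mapping.keys R" "Poly_Mapping.lookup m v = k"
  shows "Poly_Mapping.lookup (slice R v k) (clear v m) = Poly_Mapping.lookup R m"
proof -
  have "Poly_Mapping.lookup (slice R v k) (clear v m) =
     (\<Sum>m'\<in>{m\<in>Poly_Mapping.keys R. Poly_Mapping.lookup m v = k}. if m' = m then Poly_Mapping.lookup R m' else 0)"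
    unfolding slice_def lookup_sum
  proof (rule sum.cong)
    fix m' assume m': "m' \<in> {m\<in>Poly_Mapping.keys R. Poly_Mapping.lookup m v = k}"
    show "Poly_Mapping.lookup (Poly_Mapping.single (clear v m') (Poly_Mapping.lookup R m')) (clear v m) =
      (if m' = m then Poly_Mapping.lookup R m' else 0)"
    proof (cases "m' = m")
      case False
      then have "clear v m' \<noteq> clear v m" using m' assms clear_inj by auto
      then show ?thesis using False by (simp add: lookup_single when_def)
    qed simp
  qed simp
  also have "\<dots> = Poly_Mapping.lookup R m"
    using assms by (simp add: sum.delta)
  finally show ?thesis .
qed

lemma slice_nonzero:
  assumes "m \<in> Poly_Mapping.keys R"
  shows "slice R v (Poly_Mapping.lookup m v) \<noteq> 0"
proof
  assume "slice R v (Poly_Mapping.lookup m v) = 0"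
  then have "Poly_Mapping.lookup (slice R v (Poly_Mapping.lookup m v)) (clear v m) = 0" by simp
  with lookup_slice[OF assms refl] assms show False by (simp add: in_keys_iff)
qed

lemma vars_slice: "vars (slice R v k) \<subseteq> vars R - {v}"
proof
  fix i assume "i \<in> vars (slice R v k)"
  then obtain m where m: "m \<in> Poly_Mapping.keys (slice R v k)" "i \<in> Poly_Mapping.keys m"
    by (auto simp: vars_def)
  from m(1) have "(\<Sum>m'\<in>{m\<in>Poly_Mapping.keys R. Poly_Mapping.lookup m v = k}.
      Poly_Mapping.lookup (Poly_Mapping.single (clear v m') (Poly_Mapping.lookup R m')) m) \<noteq> 0"
    by (simp add: slice_def lookup_sum in_keys_iff)
  then obtain m' where m': "m' \<in> {m\<in>Poly_Mapping.keys R. Poly_Mapping.lookup m v = k}"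
    "Poly_Mapping.lookup (Poly_Mapping.single (clear v m') (Poly_Mapping.lookup R m')) m \<noteq> 0"
    by (rule sum.not_neutral_contains_not_neutral)
  from m'(2) have "m = clear v m'"
    by (metis lookup_single when_def)
  with m' have "m' \<in> Poly_Mapping.keys R" "m = clear v m'" by auto
  with m(2) show "i \<in> vars R - {v}" by (auto simp: vars_def keys_clear)
qed

lemma meval_vars: "(\<And>i. i \<in> vars R \<Longrightarrow> a i = b i) \<Longrightarrow> meval R a = meval R b"
  unfolding meval_def vars_def
proof (intro sum.cong refl)
  fix m assume "(\<And>i. i \<in> (\<Union>m\<in>Poly_Mapping.keys R. Poly_Mapping.keys m) \<Longrightarrow> a i = b i)"
    "m \<in> Poly_Mapping.keys R"
  then have "(\<Prod>i\<in>Poly_Mapping.keys m. a i ^ Poly_Mapping.lookup m i) = (\<Prod>i\<in>Poly_Mapping.keys m. b i ^ Poly_Mapping.lookup m i)"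
    by (intro prod.cong refl) (metis UN_I)
  then show "Poly_Mapping.lookup R m * (\<Prod>i\<in>Poly_Mapping.keys m. a i ^ Poly_Mapping.lookup m i) =
    Poly_Mapping.lookup R m * (\<Prod>i\<in>Poly_Mapping.keys m. b i ^ Poly_Mapping.lookup m i)" by simp
qed

lemma nonroot:
  assumes "finite V"
  shows "vars R \<subseteq> V \<Longrightarrow> R \<noteq> 0 \<Longrightarrow> \<exists>c. meval R c \<noteq> 0"
  using assms
proof (induction V arbitrary: R rule: finite_induct)
  case empty
  have K: "m = 0" if "m \<in> Poly_Mapping.keys R" for m
  proof -
    have "Poly_Mapping.keys m \<subseteq> vars R" using that unfolding vars_def by blast
    then have "Poly_Mapping.keys m = {}" using empty.prems(1) by blast
    then show "m = 0" by simp
  qed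
  have "Poly_Mapping.keys R \<noteq> {}" using empty.prems(2) by simp
  then obtain m where m: "m \<in> Poly_Mapping.keys R" by blast
  then have m0: "m = 0" by (rule K)
  have KR: "Poly_Mapping.keys R = {0}" using K m m0 by blast
  have "meval R c = Poly_Mapping.lookup R 0" for c unfolding meval_mon KR by simp
  moreover have "Poly_Mapping.lookup R 0 \<noteq> 0" using m m0 by (simp add: in_keys_iff)
  ultimately show ?case by auto
next
  case (insert v V)
  have "Poly_Mapping.keys R \<noteq> {}" using insert.prems(2) by simp
  then obtain m where m: "m \<in> Poly_Mapping.keys R" by blast
  define k where "k = Poly_Mapping.lookup m v"
  have "slice R v k \<noteq> 0" using slice_nonzero[OF m] by (simp add: k_def)
  moreover have "vars (slice R v k) \<subseteq> V" using vars_slice[of R v k] insert.prems(1) by blast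
  ultimately obtain c where c: "meval (slice R v k) c \<noteq> 0" using insert.IH by blast
  then have "upoly R v c \<noteq> 0" using coeff_upoly[of R v c k] by auto
  then obtain t where t: "poly (upoly R v c) t \<noteq> 0" using poly_all_0_iff_0 by blast
  have "meval R (c(v := t)) = poly (upoly R v (c(v:=t))) ((c(v := t)) v)"
    by (rule poly_upoly[symmetric])
  also have "\<dots> = poly (upoly R v c) t" by (simp add: upoly_upd)
  finally have "meval R (c(v := t)) \<noteq> 0" using t by simp
  then show ?case by blast
qed



definition cf :: "real poly \<Rightarrow> nat \<Rightarrow> real" where
  "cf f k = poly ((pderiv ^^ (k - 1)) f) 0"

lemma act_eq:
  assumes "degree f \<le> n"
  shows "act (msubst Q (\<lambda>k. if k = 0 then mvar 0 else vpoly n (k - 1))) f = poly (upoly Q 0 (cf f))"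
proof
  fix x
  let ?a = "\<lambda>i. if i = 0 then x else poly ((pderiv ^^ (i - 1)) f) x"
  have e: "(\<lambda>k. meval (if k = 0 then mvar 0 else vpoly n (k - 1)) ?a) = (cf f)(0 := x)"
  proof
    fix k show "meval (if k = 0 then mvar 0 else vpoly n (k - 1)) ?a = ((cf f)(0 := x)) k"
      using vpoly_eval[OF assms, of "k - 1" x] by (simp add: cf_def)
  qed
  have "act (msubst Q (\<lambda>k. if k = 0 then mvar 0 else vpoly n (k - 1))) f x = meval Q ((cf f)(0 := x))"
    unfolding act_def meval_msubst e ..
  also have "\<dots> = poly (upoly Q 0 ((cf f)(0 := x))) (((cf f)(0 := x)) 0)"
    by (rule poly_upoly[symmetric])
  also have "\<dots> = poly (upoly Q 0 (cf f)) x" by (simp add: upoly_upd)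
  finally show "act (msubst Q (\<lambda>k. if k = 0 then mvar 0 else vpoly n (k - 1))) f x = poly (upoly Q 0 (cf f)) x" .
qed

lemma degx_ge: "m \<in> Poly_Mapping.keys Q \<Longrightarrow> Poly_Mapping.lookup m 0 \<le> degx Q"
  unfolding degx_def by (rule Max_ge) auto

lemma degree_upoly: "degree (upoly Q 0 c) \<le> degx Q"
  unfolding upoly_def
  by (rule degree_sum_le) (auto intro: order_trans[OF degree_monom_le] degx_ge)

lemma degx_attained:
  assumes "Q \<noteq> 0"
  shows "\<exists>m\<in>Poly_Mapping.keys Q. Poly_Mapping.lookup m 0 = degx Q"
proof -
  let ?S = "(\<lambda>m. Poly_Mapping.lookup m 0) ` Poly_Mapping.keys Q"
  have ne: "?S \<noteq> {}" using assms by simp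
  have "degx Q = max 0 (Max ?S)" unfolding degx_def using ne by (simp add: Max_insert)
  also have "\<dots> = Max ?S" by simp
  finally have "degx Q \<in> ?S" using Max_in[OF _ ne] by simp
  then show ?thesis by force
qed

theorem mainTheorem6:
  fixes n :: nat and T Q :: mpoly
  assumes "n \<ge> 1"
    and "vars_le (Suc n) T"
    and "T \<noteq> 0"
    and "vars_le (Suc n) Q"
    and "T = msubst Q (\<lambda>k. if k = 0 then mvar 0 else vpoly n (k - 1))"
  shows "maps_into T n (int (degx Q)) \<and> \<not> maps_into T n (int (degx Q) - 1)"
proof
  have actT: "act T f = poly (upoly Q 0 (cf f))" if "degree f \<le> n" for f
    using act_eq[OF that, of Q] assms(5) by simp
  show "maps_into T n (int (degx Q))"
    unfolding maps_into_def inP_def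
    using actT degree_upoly by auto
  have Q0: "Q \<noteq> 0" using assms(3,5) by (auto simp: msubst_def)
  define M where "M = degx Q"
  obtain m0 where m0: "m0 \<in> Poly_Mapping.keys Q" "Poly_Mapping.lookup m0 0 = M"
    using degx_attained[OF Q0] by (auto simp: M_def)
  define S where "S = slice Q 0 M"
  have S0: "S \<noteq> 0" using slice_nonzero[OF m0(1), of 0] m0(2) by (simp add: S_def)
  have vQ: "vars Q \<subseteq> {..Suc n}" using assms(4) by (auto simp: vars_le_def vars_def)
  have vS: "vars S \<subseteq> {1..Suc n}"
  proof
    fix i assume "i \<in> vars S"
    then have "i \<in> vars Q" "i \<noteq> 0" using vars_slice[of Q 0 M] by (auto simp: S_def)
    then show "i \<in> {1..Suc n}" using vQ by auto
  qed
  obtain c where c: "meval S c \<noteq> 0" using nonroot[OF finite_vars order_refl S0] by blast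
  define c' where "c' k = (if 1 \<le> k \<and> k \<le> Suc n then c k else 0)" for k
  have "meval S c' = meval S c"
    by (rule meval_vars) (use vS in \<open>auto simp: c'_def\<close>)
  define f where "f = (\<Sum>j\<in>{..n}. monom (c' (Suc j) / fact j) j)"
  have df: "degree f \<le> n" unfolding f_def
    by (rule degree_sum_le) (auto intro: order_trans[OF degree_monom_le])
  have cof: "coeff f j = (if j \<le> n then c' (Suc j) / fact j else 0)" for j
    by (simp add: f_def coeff_sum)
  have cfc: "cf f k = c' k" if "k \<noteq> 0" for k
  proof -
    have "cf f k = fact (k - 1) * coeff f (k - 1)"
      by (simp add: cf_def poly_0_coeff_0 coeff_higher_pderiv pochhammer_fact)
    then show ?thesis using that by (auto simp: cof c'_def)
  qed
  have "meval S (cf f) = meval S c'"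
    by (rule meval_vars) (use vS cfc in \<open>auto\<close>)
  then have nz: "coeff (upoly Q 0 (cf f)) M \<noteq> 0"
    using c \<open>meval S c' = meval S c\<close> by (simp add: coeff_upoly S_def)
  show "\<not> maps_into T n (int (degx Q) - 1)"
  proof
    assume "maps_into T n (int (degx Q) - 1)"
    then obtain q where q: "act T f = poly q"
      "if int M - 1 < 0 then q = 0 else degree q \<le> nat (int M - 1)"
      using df unfolding maps_into_def inP_def M_def by blast
    have "q = upoly Q 0 (cf f)" using q(1) actT[OF df] by (simp add: poly_eq_poly_eq_iff)
    moreover have "coeff q M = 0"
    proof (cases "M = 0")
      case True then show ?thesis using q(2) by simp
    next
      case False then show ?thesis using q(2) by (intro coeff_eq_0) auto
    qed
    ultimately show False using nz by simp
  qed
qed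

end
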